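(* Let $m,u$ be independent indeterminates over $\mathbb{Q}$ and set $q=\frac{2(u-m)}{1+m^2-u^2}$. Then $\operatorname{rank}E_{m,q}(\mathbb{Q}(m,u))\ge2$. More precisely, the points $P_{m,q}=\bigl(-\tfrac{(2m^2-1)q^2+4mq+1}{3},\,q(mq+1)^2\bigr)$ and $H_{m,q}=(x_{m,u},y_{m,u})$ with $$x_{m,u}=\frac{5m^4+(6-10u)m^3+(4u^2-6u+10)m^2+2(u^3-3u^2-5u+3)m-u^4+6u^3-6u+5}{3(m^2-u^2+1)^2},\quad y_{m,u}=\frac{2(m-u+1)^2(m^2-um+1)}{(m^2-u^2+1)^2}$$ lie in $E_{m,q}(\mathbb{Q}(m,u))$ and are linearly independent.
   Context: For $m,q$ (rational numbers or elements of a field), $E_{m,q}$ denotes the curve given by the Weierstrass equation $$y^2=x^3-\tfrac13\bigl[(m^2+1)^2q^4+4m(m^2+1)q^3+(5m^2+4)q^2+2mq+1\bigr]x+\tfrac1{27}\bigl[2(m^2+1)^2q^4+8m(m^2+1)q^3+(7m^2+8)q^2-2mq-1\bigr]\bigl[(m^2+1)q^2+2mq+2\bigr].$$ *)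

theory Defs
  imports "HOL-Computational_Algebra.Polynomial" "HOL-Computational_Algebra.Fraction_Field"
begin

text \<open>Q(m,u) is the fraction field of the bivariate polynomial ring Q[m][u],
  realised as rat poly poly (outer variable u, coefficients in Q[m]).\<close>

type_synonym Qmu = "rat poly poly fract"

definition mvar :: Qmu where "mvar = Fract [:[:0, 1:]:] 1"
definition uvar :: Qmu where "uvar = Fract [:0, 1:] 1"

text \<open>Points: None is the point at infinity O, Some (x,y) an affine point.\<close>

definition on_curve :: "'a::field \<Rightarrow> 'a \<Rightarrow> ('a \<times> 'a) option \<Rightarrow> bool" where
  "on_curve A B P = (case P of None \<Rightarrow> True
     | Some (x, y) \<Rightarrow> y^2 = x^3 + A * x + B)"

definition nonsingular :: "'a::field \<Rightarrow> 'a \<Rightarrow> bool" where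
  "nonsingular A B = (4 * A^3 + 27 * B^2 \<noteq> 0)"

definition ec_neg :: "('a::field \<times> 'a) option \<Rightarrow> ('a \<times> 'a) option" where
  "ec_neg P = (case P of None \<Rightarrow> None | Some (x, y) \<Rightarrow> Some (x, - y))"

definition ec_add :: "'a::field \<Rightarrow> ('a \<times> 'a) option \<Rightarrow> ('a \<times> 'a) option \<Rightarrow> ('a \<times> 'a) option" where
  "ec_add A P Q = (case P of None \<Rightarrow> Q | Some (x1, y1) \<Rightarrow>
     (case Q of None \<Rightarrow> P | Some (x2, y2) \<Rightarrow>
       (if x1 = x2 \<and> y1 = - y2 then None
        else let l = (if x1 = x2 then (3 * x1^2 + A) / (2 * y1) else (y2 - y1) / (x2 - x1));
                 x3 = l^2 - x1 - x2
             in Some (x3, - (y1 + l * (x3 - x1))))))"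

definition ec_zmul :: "'a::field \<Rightarrow> int \<Rightarrow> ('a \<times> 'a) option \<Rightarrow> ('a \<times> 'a) option" where
  "ec_zmul A n P = (if 0 \<le> n then (ec_add A P ^^ nat n) None
                    else ec_neg ((ec_add A P ^^ nat (- n)) None))"

definition EA :: "'a::field \<Rightarrow> 'a \<Rightarrow> 'a" where
  "EA m q = - (1/3) * ((m^2+1)^2*q^4 + 4*m*(m^2+1)*q^3 + (5*m^2+4)*q^2 + 2*m*q + 1)"

definition EB :: "'a::field \<Rightarrow> 'a \<Rightarrow> 'a" where
  "EB m q = (1/27) * (2*(m^2+1)^2*q^4 + 8*m*(m^2+1)*q^3 + (7*m^2+8)*q^2 - 2*m*q - 1)
              * ((m^2+1)*q^2 + 2*m*q + 2)"

definition Ppt :: "'a::field \<Rightarrow> 'a \<Rightarrow> ('a \<times> 'a) option" where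
  "Ppt m q = Some (- ((2*m^2-1)*q^2 + 4*m*q + 1) / 3, q * (m*q+1)^2)"

definition Hpt :: "'a::field \<Rightarrow> 'a \<Rightarrow> ('a \<times> 'a) option" where
  "Hpt m u = Some (
     (5*m^4 + (6-10*u)*m^3 + (4*u^2-6*u+10)*m^2 + 2*(u^3-3*u^2-5*u+3)*m - u^4 + 6*u^3 - 6*u + 5)
       / (3 * (m^2-u^2+1)^2),
     2*(m-u+1)^2*(m^2-u*m+1) / (m^2-u^2+1)^2)"

end

theory Submission imports Defs "HOL-Algebra.Group" begin


definition fact3 :: "'a::field \<Rightarrow> 'a \<Rightarrow> 'a \<Rightarrow> 'a \<Rightarrow> 'a \<Rightarrow> 'a \<Rightarrow> 'a \<Rightarrow> bool" where
  "fact3 A B L n x1 x2 x3 \<longleftrightarrow> L^2 = x1+x2+x3 \<and> A - 2*L*n = x1*x2+x1*x3+x2*x3 \<and> B - n^2 = - (x1*x2*x3)"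

lemma core_param:
  fixes L M N x2 x3 x4 :: "'a::field_char_0"
  assumes phi: "L*M - L*N + M*N = x2 + x3 + x4"
  defines "x1 \<equiv> L^2 - x2 - x4" and "x5 \<equiv> M^2 - x2 - x3" and "x6 \<equiv> N^2 - x3 - x4"
    and "n \<equiv> (-(L+N)*x4 - (L-M)*x2 - (M-N)*x3)/2"
  defines "k \<equiv> L*x2 + n - M*x2"
  defines "j \<equiv> M*x3 + k - N*x3"
  shows "(L+N-M)^2 = x1+x5+x6"
    and "x1 + x6 = x2 + x3 + (L+N)*(L+N-2*M)"
    and "x1*x6 = x2*x3 + 2*(L+N)*k + (L+N)^2*x5"
    and "(L+N-M)*x1 + (-(L+N)*x5 - k) = L*x1 + n"
    and "(L+N-M)*x6 + (-(L+N)*x5-k) = N*x6 + j"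
proof -
  have x4: "x4 = L*M - L*N + M*N - x2 - x3" using phi by simp
  show "(L+N-M)^2 = x1+x5+x6" unfolding x1_def x5_def x6_def x4 by algebra
  show "x1 + x6 = x2 + x3 + (L+N)*(L+N-2*M)" unfolding x1_def x5_def x6_def x4 by algebra
  show "x1*x6 = x2*x3 + 2*(L+N)*k + (L+N)^2*x5" unfolding x1_def x5_def x6_def k_def n_def x4 
    by (simp add: field_simps) algebra
  show "(L+N-M)*x1 + (-(L+N)*x5 - k) = L*x1 + n" unfolding x1_def x5_def x6_def k_def n_def x4 
    by (simp add: field_simps) algebra
  show "(L+N-M)*x6 + (-(L+N)*x5-k) = N*x6 + j" unfolding x1_def x5_def x6_def j_def k_def n_def x4 
    by (simp add: field_simps) algebra
qed


lemma eq_neg_self: "(x::'a::field_char_0) = -x \<Longrightarrow> x = 0"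
proof -
  assume "x = -x" hence "2*x = 0" by (metis add.right_inverse mult_2)
  thus "x = 0" by simp
qed

lemma fact3_root:
  assumes "fact3 A B L n x1 x2 x3"
  shows "(L*x1+n)^2 = x1^3 + A*x1 + B" "(L*x2+n)^2 = x2^3 + A*x2 + B" "(L*x3+n)^2 = x3^3 + A*x3 + B"
  using assms unfolding fact3_def by algebra+

lemma fact3_sym:
  "fact3 A B L n x1 x2 x3 \<Longrightarrow> fact3 A B L n x2 x1 x3"
  "fact3 A B L n x1 x2 x3 \<Longrightarrow> fact3 A B L n x1 x3 x2"
  "fact3 A B L n x1 x2 x3 \<Longrightarrow> fact3 A B (-L) (-n) x1 x2 x3"
  unfolding fact3_def by (auto simp: algebra_simps)

lemma fact3_chord:
  fixes A B :: "'a::field_char_0"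
  assumes "(L*x1+n)^2 = x1^3 + A*x1 + B" "(L*x2+n)^2 = x2^3 + A*x2 + B" "x1 \<noteq> x2"
    and "x3 = L^2 - x1 - x2"
  shows "fact3 A B L n x1 x2 x3"
proof -
  have "(x1 - x2) * (A - 2*L*n - (x1*x2+x1*x3+x2*x3)) = 0"
    using assms(1,2,4) by algebra
  with assms(3) have a: "A - 2*L*n = x1*x2+x1*x3+x2*x3" by simp
  have b: "B - n^2 = - (x1*x2*x3)" using a assms(1,4) by algebra
  show ?thesis unfolding fact3_def using a b assms(4) by simp
qed

lemma fact3_tangent:
  fixes A B :: "'a::field_char_0"
  assumes "(L*x1+n)^2 = x1^3 + A*x1 + B" "2*L*(L*x1+n) = 3*x1^2 + A"
    and "x3 = L^2 - 2*x1"
  shows "fact3 A B L n x1 x1 x3"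
proof -
  have a: "A - 2*L*n = x1*x1+x1*x3+x1*x3" using assms(2,3) by algebra
  have b: "B - n^2 = - (x1*x1*x3)" using a assms(1,3) by algebra
  show ?thesis unfolding fact3_def using a b assms(3) by (simp add: power2_eq_square)
qed

lemma fact3_singular:
  fixes A B :: "'a::field_char_0"
  assumes "fact3 A B L n x1 x1 x3" "L*x1 + n = 0"
  shows "4*A^3 + 27*B^2 = 0"
  using assms unfolding fact3_def by algebra

lemma fact3_tangent_slope:
  fixes A B :: "'a::field_char_0"
  assumes "fact3 A B L n x1 x1 x3"
  shows "2*L*(L*x1+n) = 3*x1^2 + A"
  using assms unfolding fact3_def by algebra

lemma ec_add_chord:
  "x1 \<noteq> x2 \<Longrightarrow> ec_add A (Some (x1,y1)) (Some (x2,y2)) =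
     (let l = (y2-y1)/(x2-x1); x3 = l^2 - x1 - x2 in Some (x3, -(y1 + l*(x3-x1))))"
  by (simp add: ec_add_def)

lemma ec_add_tangent:
  fixes y1 :: "'a::field_char_0"
  shows "y1 \<noteq> 0 \<Longrightarrow> ec_add A (Some (x1,y1)) (Some (x1,y1)) =
     (let l = (3*x1^2+A)/(2*y1); x3 = l^2 - x1 - x1 in Some (x3, -(y1 + l*(x3-x1))))"
  using eq_neg_self[of y1] by (auto simp add: ec_add_def)

lemma add_of_fact3:
  fixes A B :: "'a::field_char_0"
  assumes f: "fact3 A B L n x1 x2 x3" and ns: "nonsingular A B"
  shows "ec_add A (Some (x1, L*x1+n)) (Some (x2, L*x2+n)) = Some (x3, -(L*x3+n))"
proof (cases "x1 = x2")
  case True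
  then have f1: "fact3 A B L n x1 x1 x3" using f by simp
  have y0: "L*x1+n \<noteq> 0"
    using fact3_singular[OF f1] ns unfolding nonsingular_def by auto
  have ts: "3*x1^2 + A = L * (2*(L*x1+n))" using fact3_tangent_slope[OF f1] by (simp add: algebra_simps)
  have sl: "(3*x1^2 + A) / (2*(L*x1+n)) = L"
  proof -
    have "2*(L*x1+n) \<noteq> 0" by (metis mult_eq_0_iff y0 zero_neq_numeral)
    thus ?thesis by (simp add: ts)
  qed
  have x3: "x3 = L^2 - x1 - x2" using f True unfolding fact3_def by simp
  show ?thesis unfolding True[symmetric]
    apply (simp only: ec_add_tangent[OF y0] Let_def sl)
    by (simp add: x3 True algebra_simps)
next
  case False
  have sl: "(L*x2+n - (L*x1+n)) / (x2 - x1) = L" using False by (simp add: field_simps)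
  have x3: "x3 = L^2 - x1 - x2" using f unfolding fact3_def by simp
  show ?thesis 
    apply (simp only: ec_add_chord[OF False] Let_def sl)
    by (simp add: x3 algebra_simps)
qed


lemma core:
  fixes A B :: "'a::field_char_0"
  assumes h1: "fact3 A B L n x1 x2 x4" and h2: "fact3 A B M k x2 x3 x5" and h3: "fact3 A B N j x4 x3 x6"
    and j1: "M*x2 + k = L*x2 + n" and j2: "N*x3 + j = M*x3 + k" and i: "N*x4 + j = -(L*x4+n)"
    and nd: "x3 \<noteq> x4 \<or> x2 \<noteq> x4"
  shows "fact3 A B (L+N-M) (-(L+N)*x5 - k) x1 x5 x6"
    and "(L+N-M)*x1 + (-(L+N)*x5 - k) = L*x1 + n"
    and "(L+N-M)*x6 + (-(L+N)*x5-k) = N*x6 + j"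
proof -
  have x1: "x1 = L^2 - x2 - x4" and a1: "A - 2*L*n = x1*x2+x1*x4+x2*x4" and b1: "B - n^2 = - (x1*x2*x4)"
    using h1 unfolding fact3_def by auto
  have x5: "x5 = M^2 - x2 - x3" and a2: "A - 2*M*k = x2*x3+x2*x5+x3*x5" and b2: "B - k^2 = - (x2*x3*x5)"
    using h2 unfolding fact3_def by auto
  have x6: "x6 = N^2 - x3 - x4" and a3: "A - 2*N*j = x4*x3+x4*x6+x3*x6"
    using h3 unfolding fact3_def by auto
  have k: "k = L*x2 + n - M*x2" using j1 by (simp add: algebra_simps)
  have j: "j = M*x3 + k - N*x3" using j2 by (simp add: algebra_simps)
  have n: "n = (-(L+N)*x4 - (L-M)*x2 - (M-N)*x3)/2" using i j k by (simp add: field_simps)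
  have d12: "(x3 - x4)*(L*M - L*N + M*N - x2 - x3 - x4) = 0"
  proof -
    have "2*L*n + x1*x2+x1*x4+x2*x4 = 2*M*k + x2*x3+x2*x5+x3*x5" using a1 a2 by algebra
    thus ?thesis unfolding x1 x5 k n by (simp add: field_simps) algebra
  qed
  have d23: "(x4 - x2)*(L*M - L*N + M*N - x2 - x3 - x4) = 0"
  proof -
    have "2*M*k + x2*x3+x2*x5+x3*x5 = 2*N*j + x4*x3+x4*x6+x3*x6" using a2 a3 by algebra
    thus ?thesis unfolding x6 x5 j k n by (simp add: field_simps) algebra
  qed
  have phi0: "L*M - L*N + M*N - x2 - x3 - x4 = 0"
  proof (cases "x3 = x4")
    case False thus ?thesis using d12 by simp
  next
    case True hence "x4 - x2 \<noteq> 0" using nd by simp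
    thus ?thesis using d23 by simp
  qed
  have phi: "L*M - L*N + M*N = x2 + x3 + x4" using phi0 by (simp add: algebra_simps)
  note cp = core_param[OF phi]
  have q1: "x1 + x6 = x2 + x3 + (L+N)*(L+N-2*M)" using cp(2) unfolding x1 x6 .
  have q0: "x1*x6 = x2*x3 + 2*(L+N)*k + (L+N)^2*x5" using cp(3) unfolding x1 x6 x5 k n .
  show "(L+N-M)*x1 + (-(L+N)*x5 - k) = L*x1 + n" using cp(4) unfolding x1 x5 k n .
  show "(L+N-M)*x6 + (-(L+N)*x5-k) = N*x6 + j" using cp(5) unfolding x6 x5 j k n .
  have g1: "(L+N-M)^2 = x1+x5+x6" using cp(1) unfolding x1 x5 x6 .
  have g2: "A - 2*(L+N-M)*(-(L+N)*x5 - k) = x1*x5+x1*x6+x5*x6"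
  proof -
    have "x1*x5+x1*x6+x5*x6 = x5*(x1+x6) + x1*x6" by algebra
    also have "\<dots> = x5*(x2 + x3 + (L+N)*(L+N-2*M)) + (x2*x3 + 2*(L+N)*k + (L+N)^2*x5)" using q1 q0 by simp
    finally show ?thesis using a2 by algebra
  qed
  have g3: "B - (-(L+N)*x5 - k)^2 = - (x1*x5*x6)"
  proof -
    have "x1*x5*x6 = x5*(x1*x6)" by algebra
    also have "\<dots> = x5*(x2*x3 + 2*(L+N)*k + (L+N)^2*x5)" using q0 by simp
    finally show ?thesis using b2 by algebra
  qed
  show "fact3 A B (L+N-M) (-(L+N)*x5 - k) x1 x5 x6" unfolding fact3_def using g1 g2 g3 by simp
qed


lemma on_curve_Some: "on_curve A B (Some (x,y)) \<longleftrightarrow> y^2 = x^3 + A*x + B"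
  by (simp add: on_curve_def)

lemma fact3_of_add:
  fixes A B :: "'a::field_char_0"
  assumes c1: "on_curve A B (Some (x1,y1))" and c2: "on_curve A B (Some (x2,y2))"
    and s: "ec_add A (Some (x1,y1)) (Some (x2,y2)) = Some (x3,y3)"
  shows "\<exists>L n. y1 = L*x1+n \<and> y2 = L*x2+n \<and> y3 = -(L*x3+n) \<and> fact3 A B L n x1 x2 x3"
proof (cases "x1 = x2")
  case True
  have nn: "\<not> (y1 = -y2)" using s True by (auto simp: ec_add_def)
  have "y1^2 = y2^2" using c1 c2 True by (simp add: on_curve_Some)
  hence "(y1 - y2)*(y1+y2) = 0" by algebra
  hence yy: "y1 = y2" using nn by (auto simp: add_eq_0_iff2)
  have y0: "y1 \<noteq> 0" using nn yy by auto
  define L where "L = (3*x1^2+A)/(2*y1)"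
  define n where "n = y1 - L*x1"
  have y1: "y1 = L*x1 + n" unfolding n_def by simp
  have e: "ec_add A (Some (x1,y1)) (Some (x2,y2)) = Some (L^2 - x1 - x1, -(y1 + L*((L^2 - x1 - x1) - x1)))"
    unfolding True[symmetric] yy[symmetric] using ec_add_tangent[OF y0, of A x1] by (simp add: Let_def L_def)
  have x3: "x3 = L^2 - 2*x1" and y3: "y3 = -(y1 + L*(x3 - x1))" using e s by auto
  have t1: "2*L*y1 = 3*x1^2 + A" using y0 unfolding L_def by (simp add: field_simps)
  have t2: "2*L*(L*x1+n) = 3*x1^2 + A" using t1 y1 by simp
  have f: "fact3 A B L n x1 x1 x3"
    by (rule fact3_tangent) (use c1 y1 t2 x3 in \<open>auto simp: on_curve_Some\<close>)
  have y3': "y3 = -(L*x3+n)" using y3 y1 by (simp add: algebra_simps)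
  show ?thesis using f True yy y1 y3' by blast
next
  case False
  define L where "L = (y2-y1)/(x2-x1)"
  define n where "n = y1 - L*x1"
  have y1: "y1 = L*x1 + n" unfolding n_def by simp
  have "L*(x2-x1) = y2 - y1" using False unfolding L_def by simp
  hence y2: "y2 = L*x2 + n" unfolding n_def by (simp add: algebra_simps)
  have e: "ec_add A (Some (x1,y1)) (Some (x2,y2)) = Some (L^2 - x1 - x2, -(y1 + L*((L^2 - x1 - x2) - x1)))"
    using ec_add_chord[OF False] by (simp add: Let_def L_def)
  have x3: "x3 = L^2 - x1 - x2" and y3: "y3 = -(y1 + L*(x3 - x1))" using e s by auto
  have f: "fact3 A B L n x1 x2 x3"
    by (rule fact3_chord) (use c1 c2 y1 y2 x3 False in \<open>auto simp: on_curve_Some\<close>)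
  have y3': "y3 = -(L*x3+n)" using y3 y1 by (simp add: algebra_simps)
  show ?thesis using f y1 y2 y3' by blast
qed

locale ell =
  fixes A B :: "'a::field_char_0"
  assumes ns: "nonsingular A B"
begin

abbreviation "oc P \<equiv> on_curve A B P"
abbreviation add (infixl "\<oplus>" 65) where "P \<oplus> Q \<equiv> ec_add A P Q"

lemma add_None_left[simp]: "None \<oplus> P = P" by (simp add: ec_add_def)
lemma add_None_right[simp]: "P \<oplus> None = P" by (cases P) (auto simp: ec_add_def)

lemma neg_neg[simp]: "ec_neg (ec_neg P) = P" by (cases P) (auto simp: ec_neg_def)
lemma neg_None[simp]: "ec_neg None = None" by (simp add: ec_neg_def)
lemma neg_Some[simp]: "ec_neg (Some (x,y)) = Some (x,-y)" by (simp add: ec_neg_def)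
lemma oc_neg[simp]: "oc (ec_neg P) = oc P" by (cases P) (auto simp: on_curve_def ec_neg_def)

lemma add_neg_self[simp]: "P \<oplus> ec_neg P = None" by (cases P) (auto simp: ec_add_def)
lemma neg_add_self[simp]: "ec_neg P \<oplus> P = None" by (cases P) (auto simp: ec_add_def)

lemma add_None_iff: "P \<oplus> Q = None \<longleftrightarrow> Q = ec_neg P"
  apply (cases P; cases Q)
  by (auto simp: ec_add_def Let_def split: if_splits)

lemma oc_add:
  assumes "oc P" "oc Q" shows "oc (P \<oplus> Q)"
proof (cases "P \<oplus> Q")
  case None thus ?thesis by (simp add: on_curve_def)
next
  case (Some W)
  show ?thesis
  proof (cases P)
    case None thus ?thesis using assms by simp
  next
    case P: (Some p)
    show ?thesis
    proof (cases Q)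
      case None thus ?thesis using assms by simp
    next
      case Q: (Some q)
      obtain x1 y1 x2 y2 x3 y3 where pq: "p = (x1,y1)" "q = (x2,y2)" "W = (x3,y3)" by (cases p, cases q, cases W) auto
      from fact3_of_add[of A B x1 y1 x2 y2 x3 y3] assms P Q Some pq obtain L n where
        y3: "y3 = -(L*x3+n)" and f: "fact3 A B L n x1 x2 x3" by auto
      have "(L*x3+n)^2 = x3^3+A*x3+B" by (rule fact3_root(3)[OF f])
      moreover have "(- (L*x3) - n)^2 = (L*x3+n)^2" by algebra
      ultimately show ?thesis using Some pq y3 by (simp add: on_curve_Some)
    qed
  qed
qed

lemma add_fact3_cases:
  assumes "oc (Some (x1,y1))" "oc (Some (x2,y2))"
  shows "Some (x1,y1) \<oplus> Some (x2,y2) = None \<or>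
    (\<exists>L n x3. y1 = L*x1+n \<and> y2 = L*x2+n \<and> fact3 A B L n x1 x2 x3 \<and>
       Some (x1,y1) \<oplus> Some (x2,y2) = Some (x3, -(L*x3+n)))"
proof (cases "Some (x1,y1) \<oplus> Some (x2,y2)")
  case None thus ?thesis by simp
next
  case (Some W)
  obtain x3 y3 where W: "W = (x3,y3)" by (cases W) auto
  from fact3_of_add[OF assms] Some W obtain L n where
    "y1 = L*x1+n" "y2 = L*x2+n" "y3 = -(L*x3+n)" "fact3 A B L n x1 x2 x3" by auto
  thus ?thesis using Some W by blast
qed

lemma add_comm:
  assumes "oc P" "oc Q" shows "P \<oplus> Q = Q \<oplus> P"
proof (cases P)
  case None thus ?thesis by simp
next
  case P: (Some p)
  show ?thesis
  proof (cases Q)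
    case None thus ?thesis using P by simp
  next
    case Q: (Some q)
    obtain x1 y1 x2 y2 where pq: "p = (x1,y1)" "q = (x2,y2)" by (cases p, cases q) auto
    have c1: "oc (Some (x1,y1))" and c2: "oc (Some (x2,y2))" using assms P Q pq by auto
    from add_fact3_cases[OF c1 c2] show ?thesis
    proof
      assume "Some (x1,y1) \<oplus> Some (x2,y2) = None"
      hence "Some (x2,y2) = ec_neg (Some (x1,y1))" by (simp add: add_None_iff)
      hence "Some (x2,y2) \<oplus> Some (x1,y1) = None" by (simp add: add_None_iff)
      thus ?thesis using \<open>Some (x1,y1) \<oplus> Some (x2,y2) = None\<close> P Q pq by simp
    next
      assume "\<exists>L n x3. y1 = L*x1+n \<and> y2 = L*x2+n \<and> fact3 A B L n x1 x2 x3 \<and>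
       Some (x1,y1) \<oplus> Some (x2,y2) = Some (x3, -(L*x3+n))"
      then obtain L n x3 where h: "y1 = L*x1+n" "y2 = L*x2+n" "fact3 A B L n x1 x2 x3"
        "Some (x1,y1) \<oplus> Some (x2,y2) = Some (x3, -(L*x3+n))" by blast
      have "Some (x2,y2) \<oplus> Some (x1,y1) = Some (x3, -(L*x3+n))"
        using add_of_fact3[OF fact3_sym(1)[OF h(3)] ns] h(1,2) by simp
      thus ?thesis using h(4) P Q pq by simp
    qed
  qed
qed

lemma neg_add:
  assumes "oc P" "oc Q" shows "ec_neg (P \<oplus> Q) = ec_neg P \<oplus> ec_neg Q"
proof (cases P)
  case None thus ?thesis by simp
next
  case P: (Some p)
  show ?thesis
  proof (cases Q)
    case None thus ?thesis using P by simp
  next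
    case Q: (Some q)
    obtain x1 y1 x2 y2 where pq: "p = (x1,y1)" "q = (x2,y2)" by (cases p, cases q) auto
    have c1: "oc (Some (x1,y1))" and c2: "oc (Some (x2,y2))" using assms P Q pq by auto
    from add_fact3_cases[OF c1 c2] show ?thesis
    proof
      assume a: "Some (x1,y1) \<oplus> Some (x2,y2) = None"
      hence "Some (x2,y2) = ec_neg (Some (x1,y1))" by (simp add: add_None_iff)
      hence "ec_neg (Some (x1,y1)) \<oplus> ec_neg (Some (x2,y2)) = None" by (simp add: add_None_iff)
      thus ?thesis using a P Q pq by simp
    next
      assume "\<exists>L n x3. y1 = L*x1+n \<and> y2 = L*x2+n \<and> fact3 A B L n x1 x2 x3 \<and>
       Some (x1,y1) \<oplus> Some (x2,y2) = Some (x3, -(L*x3+n))"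
      then obtain L n x3 where h: "y1 = L*x1+n" "y2 = L*x2+n" "fact3 A B L n x1 x2 x3"
        "Some (x1,y1) \<oplus> Some (x2,y2) = Some (x3, -(L*x3+n))" by blast
      have "Some (x1,(-L)*x1+(-n)) \<oplus> Some (x2,(-L)*x2+(-n)) = Some (x3, -((-L)*x3+(-n)))"
        using add_of_fact3[OF fact3_sym(3)[OF h(3)] ns] by simp
      thus ?thesis using h P Q pq by simp
    qed
  qed
qed

lemma sub_eq:
  assumes "oc P" "oc Q" "P \<oplus> Q = W" shows "ec_neg P \<oplus> W = Q"
proof (cases P)
  case None thus ?thesis using assms by simp
next
  case P: (Some p)
  show ?thesis
  proof (cases Q)
    case None thus ?thesis using P assms by simp
  next
    case Q: (Some q)
    obtain x1 y1 x2 y2 where pq: "p = (x1,y1)" "q = (x2,y2)" by (cases p, cases q) auto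
    have c1: "oc (Some (x1,y1))" and c2: "oc (Some (x2,y2))" using assms P Q pq by auto
    from add_fact3_cases[OF c1 c2] show ?thesis
    proof
      assume a: "Some (x1,y1) \<oplus> Some (x2,y2) = None"
      hence "Some (x2,y2) = ec_neg (Some (x1,y1))" by (simp add: add_None_iff)
      thus ?thesis using a P Q pq assms by simp
    next
      assume "\<exists>L n x3. y1 = L*x1+n \<and> y2 = L*x2+n \<and> fact3 A B L n x1 x2 x3 \<and>
       Some (x1,y1) \<oplus> Some (x2,y2) = Some (x3, -(L*x3+n))"
      then obtain L n x3 where h: "y1 = L*x1+n" "y2 = L*x2+n" "fact3 A B L n x1 x2 x3"
        "Some (x1,y1) \<oplus> Some (x2,y2) = Some (x3, -(L*x3+n))" by blast
      have f: "fact3 A B (-L) (-n) x1 x3 x2" using fact3_sym(3)[OF fact3_sym(2)[OF h(3)]] .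
      have "Some (x1,(-L)*x1+(-n)) \<oplus> Some (x3,(-L)*x3+(-n)) = Some (x2, -((-L)*x2+(-n)))"
        using add_of_fact3[OF f ns] by simp
      thus ?thesis using h P Q pq assms by simp
    qed
  qed
qed

end


context ell begin

lemma oc_None[simp]: "oc None" by (simp add: on_curve_def)

lemma add_left_unique: assumes "oc P" "oc Q" "P \<oplus> Q = Q" shows "P = None"
proof -
  have "Q \<oplus> P = Q" using assms add_comm by simp
  hence "ec_neg Q \<oplus> Q = P" using sub_eq assms by blast
  thus ?thesis by simp
qed

lemma same_x:
  assumes "oc (Some (x,y))" "oc (Some (x,y'))" shows "y' = y \<or> y' = -y"
proof -
  have "y^2 = y'^2" using assms by (simp add: on_curve_Some)
  hence "(y' - y)*(y'+y) = 0" by algebra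
  thus ?thesis by (auto simp: add_eq_0_iff2)
qed

lemma add_assoc:
  assumes p: "oc P" and q: "oc Q" and r: "oc R"
  shows "(P \<oplus> Q) \<oplus> R = P \<oplus> (Q \<oplus> R)"
proof (cases "P = None \<or> Q = None \<or> R = None")
  case True thus ?thesis by auto
next
  case False
  have s: "oc (P \<oplus> Q)" and u: "oc (Q \<oplus> R)" using p q r oc_add by auto
  show ?thesis
  proof (cases "P \<oplus> Q = None")
    case True
    hence "Q = ec_neg P" by (simp add: add_None_iff)
    moreover have "ec_neg (ec_neg P) \<oplus> (ec_neg P \<oplus> R) = R" by (rule sub_eq) (use p r in auto)
    ultimately show ?thesis using True by simp
  next
    case SN: False
    show ?thesis
    proof (cases "Q \<oplus> R = None")
      case True
      hence R: "R = ec_neg Q" by (simp add: add_None_iff)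
      have "Q \<oplus> P = P \<oplus> Q" using add_comm p q by simp
      hence "ec_neg Q \<oplus> (P \<oplus> Q) = P" using sub_eq[OF q p] by simp
      hence "(P \<oplus> Q) \<oplus> ec_neg Q = P" using add_comm[OF s] q by simp
      thus ?thesis using True R by simp
    next
      case UN: False
      show ?thesis
      proof (cases "(P \<oplus> Q) \<oplus> R = None")
        case True
        hence R: "R = ec_neg (P \<oplus> Q)" by (simp add: add_None_iff)
        have "Q \<oplus> P = P \<oplus> Q" using add_comm p q by simp
        hence "ec_neg Q \<oplus> (P \<oplus> Q) = P" using sub_eq[OF q p] by simp
        hence "ec_neg (ec_neg Q \<oplus> (P \<oplus> Q)) = ec_neg P" by simp
        hence "Q \<oplus> ec_neg (P \<oplus> Q) = ec_neg P" using neg_add[of "ec_neg Q" "P \<oplus> Q"] q s by simp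
        thus ?thesis using True R by simp
      next
        case VN: False
        show ?thesis
        proof (cases "P \<oplus> (Q \<oplus> R) = None")
          case True
          hence "Q \<oplus> R = ec_neg P" by (simp add: add_None_iff)
          hence "ec_neg Q \<oplus> ec_neg P = R" using sub_eq[OF q r] by simp
          hence "ec_neg (Q \<oplus> P) = R" using neg_add[OF q p] by simp
          hence "R = ec_neg (P \<oplus> Q)" using add_comm[OF p q] by simp
          thus ?thesis using True by simp
        next
          case WN: False
          obtain x1 y1 where P: "P = Some (x1,y1)" using False by auto
          obtain x2 y2 where Q: "Q = Some (x2,y2)" using False by auto
          obtain x3 y3 where R: "R = Some (x3,y3)" using False by auto
          obtain x4 y4 where S: "P \<oplus> Q = Some (x4,y4)" using SN by auto
          obtain x5 y5 where U: "Q \<oplus> R = Some (x5,y5)" using UN by auto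
          obtain x6 y6 where V: "(P \<oplus> Q) \<oplus> R = Some (x6,y6)" using VN by auto
          have c1: "oc (Some (x1,y1))" "oc (Some (x2,y2))" "oc (Some (x3,y3))" "oc (Some (x4,y4))"
            "oc (Some (x5,y5))" using p q r s u P Q R S U by auto
          obtain L n where l1: "y1 = L*x1+n" "y2 = L*x2+n" "y4 = -(L*x4+n)" "fact3 A B L n x1 x2 x4"
            using fact3_of_add[OF c1(1) c1(2), of x4 y4] S P Q by auto
          obtain M k where l2: "y2 = M*x2+k" "y3 = M*x3+k" "y5 = -(M*x5+k)" "fact3 A B M k x2 x3 x5"
            using fact3_of_add[OF c1(2) c1(3), of x5 y5] U Q R by auto
          obtain N j where l3: "y4 = N*x4+j" "y3 = N*x3+j" "y6 = -(N*x6+j)" "fact3 A B N j x4 x3 x6"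
            using fact3_of_add[OF c1(4) c1(3), of x6 y6] V S R by auto
          have nd: "x3 \<noteq> x4 \<or> x2 \<noteq> x4"
          proof (rule ccontr)
            assume "\<not> (x3 \<noteq> x4 \<or> x2 \<noteq> x4)"
            hence e: "x3 = x4" "x2 = x4" by auto
            have "y4 = y3 \<or> y4 = -y3" using same_x[of x3 y3 y4] c1 e by simp
            moreover have "y4 \<noteq> -y3"
            proof
              assume "y4 = -y3"
              hence "R = ec_neg (P \<oplus> Q)" using S R e by simp
              thus False using VN by simp
            qed
            ultimately have SR: "P \<oplus> Q = R" using S R e by simp
            have "y2 = y3 \<or> y2 = -y3" using same_x[of x3 y3 y2] c1 e by simp
            moreover have "y2 \<noteq> -y3"
            proof
              assume "y2 = -y3"
              hence "R = ec_neg Q" using Q R e by simp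
              thus False using UN by simp
            qed
            ultimately have "Q = R" using Q R e by simp
            hence "P \<oplus> Q = Q" using SR by simp
            hence "P = None" using add_left_unique p q by blast
            thus False using False by simp
          qed
          have j1: "M*x2 + k = L*x2 + n" using l1 l2 by simp
          have j2: "N*x3 + j = M*x3 + k" using l2 l3 by simp
          have i: "N*x4 + j = -(L*x4+n)" using l1 l3 by simp
          note co = core[OF l1(4) l2(4) l3(4) j1 j2 i nd]
          have "Some (x1, (L+N-M)*x1 + (-(L+N)*x5 - k)) \<oplus> Some (x5, (L+N-M)*x5 + (-(L+N)*x5 - k))
              = Some (x6, -((L+N-M)*x6 + (-(L+N)*x5 - k)))"
            by (rule add_of_fact3[OF co(1) ns])
          moreover have "(L+N-M)*x1 + (-(L+N)*x5 - k) = y1" using co(2) l1 by simp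
          moreover have "(L+N-M)*x5 + (-(L+N)*x5 - k) = y5" using l2 by (simp add: algebra_simps)
          moreover have "-((L+N-M)*x6 + (-(L+N)*x5 - k)) = y6" using co(3) l3 by simp
          ultimately have "P \<oplus> (Q \<oplus> R) = Some (x6, y6)" using P U by simp
          thus ?thesis using V by simp
        qed
      qed
    qed
  qed
qed

end


definition issq :: "'a::field \<Rightarrow> bool" where "issq z \<longleftrightarrow> (\<exists>c. z = c^2)"

locale ell2 = ell +
  fixes e0 :: 'a
  assumes root: "e0^3 + A*e0 + B = 0"
begin

definition b0 where "b0 = 3*e0^2 + A"

lemma b0_nz: "b0 \<noteq> 0"
proof
  assume "b0 = 0"
  hence "4*A^3 + 27*B^2 = 0" using root unfolding b0_def by algebra
  thus False using ns unfolding nonsingular_def by simp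
qed

definition ax :: "'a \<Rightarrow> 'a" where "ax x = (if x = e0 then b0 else x - e0)"

definition alpha :: "('a \<times> 'a) option \<Rightarrow> 'a" where
  "alpha P = (case P of None \<Rightarrow> 1 | Some (x,y) \<Rightarrow> ax x)"

lemma ax_nz: "ax x \<noteq> 0" using b0_nz by (simp add: ax_def)
lemma alpha_nz: "alpha P \<noteq> 0" using ax_nz by (auto simp: alpha_def split: option.splits)
lemma alpha_neg[simp]: "alpha (ec_neg P) = alpha P" by (cases P) (auto simp: alpha_def)

lemma fact3_e0_double: assumes "fact3 A B L n e0 e0 x" shows False
proof -
  have "(L*e0+n)^2 = e0^3 + A*e0 + B" using fact3_root(1)[OF assms] .
  hence "(L*e0+n)^2 = 0" using root by simp
  hence "L*e0+n = 0" by simp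
  hence "4*A^3 + 27*B^2 = 0" using fact3_singular[OF assms] by simp
  thus False using ns unfolding nonsingular_def by simp
qed

lemma fact3_e0_single: assumes "fact3 A B L n x1 x2 e0" shows "(x1-e0)*(x2-e0) = b0"
proof -
  have "(L*e0+n)^2 = e0^3 + A*e0 + B" using fact3_root(3)[OF assms] .
  hence "(L*e0+n)^2 = 0" using root by simp
  hence n: "n = -L*e0" by (simp add: algebra_simps add_eq_0_iff2)
  show ?thesis using assms root unfolding fact3_def b0_def n by algebra
qed

lemma issq_mult: "issq a \<Longrightarrow> issq b \<Longrightarrow> issq (a*b)"
  unfolding issq_def by (auto simp: power_mult_distrib[symmetric])

lemma alpha3: assumes f: "fact3 A B L n x1 x2 x3" shows "issq (ax x1 * ax x2 * ax x3)"
proof -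
  consider "x1 \<noteq> e0" "x2 \<noteq> e0" "x3 \<noteq> e0" | "x1 = e0" "x2 \<noteq> e0" "x3 \<noteq> e0" | "x1 \<noteq> e0" "x2 = e0" "x3 \<noteq> e0"
    | "x1 \<noteq> e0" "x2 \<noteq> e0" "x3 = e0" | "x1 = e0" "x2 = e0" | "x1 = e0" "x3 = e0" | "x2 = e0" "x3 = e0" by blast
  thus ?thesis
  proof cases
    case 1
    have "(x1-e0)*(x2-e0)*(x3-e0) = (L*e0+n)^2" using f root unfolding fact3_def by algebra
    thus ?thesis using 1 unfolding ax_def issq_def by auto
  next
    case 2
    have "fact3 A B L n x2 x3 e0" using fact3_sym(2)[OF fact3_sym(1)[OF f]] 2 by simp
    hence e: "(x2-e0)*(x3-e0) = b0" by (rule fact3_e0_single)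
    have "ax x1 * ax x2 * ax x3 = b0 * ((x2-e0)*(x3-e0))" using 2 by (simp add: ax_def mult_ac)
    thus ?thesis unfolding e issq_def power2_eq_square by blast
  next
    case 3
    have "fact3 A B L n x1 x3 e0" using fact3_sym(2)[OF f] 3 by simp
    hence e: "(x1-e0)*(x3-e0) = b0" by (rule fact3_e0_single)
    have "ax x1 * ax x2 * ax x3 = b0 * ((x1-e0)*(x3-e0))" using 3 by (simp add: ax_def mult_ac)
    thus ?thesis unfolding e issq_def power2_eq_square by blast
  next
    case 4
    have e: "(x1-e0)*(x2-e0) = b0" by (rule fact3_e0_single) (use f 4 in simp)
    have "ax x1 * ax x2 * ax x3 = b0 * ((x1-e0)*(x2-e0))" using 4 by (simp add: ax_def mult_ac)
    thus ?thesis unfolding e issq_def power2_eq_square by blast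
  next
    case 5 thus ?thesis using fact3_e0_double f by blast
  next
    case 6 thus ?thesis using fact3_e0_double fact3_sym(2)[OF f] by blast
  next
    case 7 thus ?thesis using fact3_e0_double fact3_sym(2)[OF fact3_sym(1)[OF f]] by blast
  qed
qed

lemma alpha_hom:
  assumes "oc P" "oc Q" shows "issq (alpha (P \<oplus> Q) * alpha P * alpha Q)"
proof (cases P)
  case None
  hence "alpha (P \<oplus> Q) * alpha P * alpha Q = (alpha Q)^2" by (simp add: alpha_def power2_eq_square)
  thus ?thesis by (auto simp: issq_def)
next
  case P: (Some p)
  show ?thesis
  proof (cases Q)
    case None
    hence "alpha (P \<oplus> Q) * alpha P * alpha Q = (alpha P)^2" by (simp add: alpha_def power2_eq_square)
    thus ?thesis by (auto simp: issq_def)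
  next
    case Q: (Some q)
    obtain x1 y1 x2 y2 where pq: "p = (x1,y1)" "q = (x2,y2)" by (cases p, cases q) auto
    have c1: "oc (Some (x1,y1))" and c2: "oc (Some (x2,y2))" using assms P Q pq by auto
    from add_fact3_cases[OF c1 c2] show ?thesis
    proof
      assume a: "Some (x1,y1) \<oplus> Some (x2,y2) = None"
      hence "Some (x2,y2) = ec_neg (Some (x1,y1))" by (simp add: add_None_iff)
      hence "alpha Q = alpha P" using P Q pq by (metis alpha_neg)
      hence "alpha (P \<oplus> Q) * alpha P * alpha Q = (alpha P)^2" using a P Q pq by (simp add: alpha_def power2_eq_square)
      thus ?thesis by (auto simp: issq_def)
    next
      assume "\<exists>L n x3. y1 = L*x1+n \<and> y2 = L*x2+n \<and> fact3 A B L n x1 x2 x3 \<and>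
       Some (x1,y1) \<oplus> Some (x2,y2) = Some (x3, -(L*x3+n))"
      then obtain L n x3 where h: "fact3 A B L n x1 x2 x3"
        "Some (x1,y1) \<oplus> Some (x2,y2) = Some (x3, -(L*x3+n))" by blast
      have "issq (ax x1 * ax x2 * ax x3)" by (rule alpha3[OF h(1)])
      thus ?thesis using h P Q pq by (simp add: alpha_def mult_ac)
    qed
  qed
qed

end


lemma issq_sq[simp]: "issq (c^2)" by (auto simp: issq_def)
lemma issq_mult': "issq a \<Longrightarrow> issq b \<Longrightarrow> issq (a*b)"
  unfolding issq_def by (auto simp: power_mult_distrib[symmetric])
lemma issq_cancel: "issq (a*b) \<Longrightarrow> issq a \<Longrightarrow> a \<noteq> 0 \<Longrightarrow> issq (b::'a::field)"
proof -
  assume "issq (a*b)" "issq a" "a \<noteq> 0"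
  then obtain s t where "a*b = s^2" "a = t^2" by (auto simp: issq_def)
  hence "b = (s/t)^2" using \<open>a \<noteq> 0\<close> by (auto simp: field_simps power2_eq_square)
  thus "issq b" by simp
qed
lemma issq_mult_sq: "c \<noteq> 0 \<Longrightarrow> issq (a * c^2) \<longleftrightarrow> issq (a::'a::field)"
proof
  assume "c \<noteq> 0" "issq (a*c^2)"
  thus "issq a" using issq_cancel[of "c^2" a] by (simp add: mult.commute)
next
  assume "issq a" thus "issq (a*c^2)" by (simp add: issq_mult')
qed
lemma issq_pow_mod2: "v \<noteq> 0 \<Longrightarrow> issq (u * v^n) \<longleftrightarrow> issq (u * (v::'a::field)^(n mod 2))"
proof -
  assume v: "v \<noteq> 0"
  have "v^n = v^(n mod 2) * (v^(n div 2))^2"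
    by (metis power_add power_mult mod_div_mult_eq mult.commute)
  hence e: "u * v^n = (u * v^(n mod 2)) * (v^(n div 2))^2" by (simp add: mult_ac)
  have "v^(n div 2) \<noteq> 0" using v by simp
  thus ?thesis unfolding e by (rule issq_mult_sq)
qed

context comm_group begin

lemma descent:
  fixes alpha :: "'a \<Rightarrow> 'k::field"
  assumes anz: "\<And>x. x \<in> carrier G \<Longrightarrow> alpha x \<noteq> 0"
   and hom: "\<And>x y. x \<in> carrier G \<Longrightarrow> y \<in> carrier G \<Longrightarrow> issq (alpha (x \<otimes> y) * alpha x * alpha y)"
   and P: "P \<in> carrier G" and H: "H \<in> carrier G"
   and n1: "\<not> issq (alpha P)" "\<not> issq (alpha H)" "\<not> issq (alpha P * alpha H)"
   and t2: "\<And>X. X \<in> carrier G \<Longrightarrow> X \<otimes> X = \<one> \<Longrightarrow> X = \<one> \<or> X = T"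
   and t3: "issq (alpha T)"
   and t4: "\<And>Y. Y \<in> carrier G \<Longrightarrow> Y \<otimes> Y \<noteq> T"
  shows "P [^] (a::int) \<otimes> H [^] (c::int) = \<one> \<Longrightarrow> a = 0 \<and> c = 0"
proof -
  have a1: "issq (alpha \<one>)"
  proof -
    have "issq (alpha \<one> * alpha \<one> * alpha \<one>)" using hom[of \<one> \<one>] by simp
    hence "issq (alpha \<one> * (alpha \<one>)^2)" by (simp add: power2_eq_square mult_ac)
    thus ?thesis using anz[of \<one>] by (simp add: issq_mult_sq)
  qed
  have hom2: "issq (alpha (x \<otimes> y) * (alpha x * alpha y))" if "x \<in> carrier G" "y \<in> carrier G" for x y
    using hom[OF that] by (simp add: mult_ac)
  have npow: "issq (alpha (x [^] n) * alpha x ^ n)" if x: "x \<in> carrier G" for x and n :: nat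
  proof (induction n)
    case 0 thus ?case using a1 by simp
  next
    case (Suc n)
    have xn: "x [^] n \<in> carrier G" using x by simp
    have "issq (alpha (x [^] n \<otimes> x) * (alpha (x [^] n) * alpha x))" using hom2[OF xn x] .
    hence "issq ((alpha (x [^] n \<otimes> x) * (alpha (x [^] n) * alpha x)) * (alpha (x [^] n) * alpha x ^ n))"
      using Suc.IH issq_mult' by blast
    hence "issq ((alpha (x [^] n \<otimes> x) * alpha x ^ Suc n) * (alpha (x [^] n))^2)"
      by (simp add: power2_eq_square mult_ac)
    thus ?case using anz[OF xn] by (simp add: issq_mult_sq)
  qed
  have ainv: "issq (alpha (inv x) * alpha x)" if x: "x \<in> carrier G" for x
  proof -
    have "issq (alpha (x \<otimes> inv x) * (alpha x * alpha (inv x)))" using hom2[OF x inv_closed[OF x]] .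
    hence "issq (alpha \<one> * (alpha (inv x) * alpha x))" using x by (simp add: mult_ac)
    thus ?thesis using a1 anz[of \<one>] issq_cancel by blast
  qed
  have ipow: "issq (alpha (x [^] i) * alpha x ^ (nat \<bar>i\<bar>))" if x: "x \<in> carrier G" for x and i :: int
  proof (cases "i \<ge> 0")
    case True
    then obtain n where "i = int n" by (metis nonneg_eq_int)
    thus ?thesis using npow[OF x, of n] by (simp add: int_pow_int)
  next
    case False
    then obtain n where i: "i = - int n" by (metis neg_0_le_iff_le nonneg_eq_int linorder_not_le less_imp_le minus_minus)
    have xn: "x [^] n \<in> carrier G" using x by simp
    have e: "x [^] i = inv (x [^] n)" using x by (simp add: i int_pow_neg_int)
    have "issq (alpha (inv (x [^] n)) * alpha (x [^] n))" by (rule ainv[OF xn])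
    hence "issq ((alpha (inv (x [^] n)) * alpha (x [^] n)) * (alpha (x [^] n) * alpha x ^ n))"
      using npow[OF x, of n] issq_mult' by blast
    hence "issq ((alpha (inv (x [^] n)) * alpha x ^ n) * (alpha (x [^] n))^2)"
      by (simp add: power2_eq_square mult_ac)
    hence "issq (alpha (inv (x [^] n)) * alpha x ^ n)" using anz[OF xn] by (simp add: issq_mult_sq)
    thus ?thesis using e i by simp
  qed
  have par: "even a \<and> even c" if rel: "alpha (P [^] a \<otimes> H [^] c) = alpha \<one> \<or> issq (alpha (P [^] a \<otimes> H [^] c))" for a c :: int
  proof -
    have Pa: "P [^] a \<in> carrier G" and Hc: "H [^] c \<in> carrier G" using P H by auto
    have s0: "issq (alpha (P [^] a \<otimes> H [^] c))" using rel a1 by auto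
    have "issq (alpha (P [^] a \<otimes> H [^] c) * (alpha (P [^] a) * alpha (H [^] c)))" by (rule hom2[OF Pa Hc])
    hence s1: "issq (alpha (P [^] a) * alpha (H [^] c))"
      by (rule issq_cancel) (use s0 anz[OF m_closed[OF Pa Hc]] in auto)
    have "issq ((alpha (P [^] a) * alpha (H [^] c)) * ((alpha (P [^] a) * alpha P ^ (nat \<bar>a\<bar>)) * (alpha (H [^] c) * alpha H ^ (nat \<bar>c\<bar>))))"
      using s1 ipow[OF P, of a] ipow[OF H, of c] issq_mult' by blast
    hence "issq ((alpha P ^ (nat \<bar>a\<bar>) * alpha H ^ (nat \<bar>c\<bar>)) * (alpha (P [^] a) * alpha (H [^] c))^2)"
      by (simp add: power2_eq_square mult_ac)
    moreover have "alpha (P [^] a) * alpha (H [^] c) \<noteq> 0" using anz[OF Pa] anz[OF Hc] by simp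
    ultimately have s2: "issq (alpha P ^ (nat \<bar>a\<bar>) * alpha H ^ (nat \<bar>c\<bar>))"
      using issq_mult_sq by blast
    have "issq (alpha H ^ (nat \<bar>c\<bar>) * alpha P ^ (nat \<bar>a\<bar>))" using s2 by (metis mult.commute)
    hence "issq (alpha H ^ (nat \<bar>c\<bar>) * alpha P ^ (nat \<bar>a\<bar> mod 2))"
      using issq_pow_mod2[OF anz[OF P]] by blast
    hence "issq (alpha P ^ (nat \<bar>a\<bar> mod 2) * alpha H ^ (nat \<bar>c\<bar>))" by (metis mult.commute)
    hence s3: "issq (alpha P ^ (nat \<bar>a\<bar> mod 2) * alpha H ^ (nat \<bar>c\<bar> mod 2))"
      using issq_pow_mod2[OF anz[OF H]] by blast
    have ea: "even a \<longleftrightarrow> nat \<bar>a\<bar> mod 2 = 0"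
    proof -
      have "even (nat \<bar>a\<bar>) \<longleftrightarrow> even \<bar>a\<bar>" by (rule even_nat_iff) simp
      moreover have "even (nat \<bar>a\<bar>) \<longleftrightarrow> nat \<bar>a\<bar> mod 2 = 0" by (rule even_iff_mod_2_eq_zero)
      ultimately show ?thesis by simp
    qed
    have ec: "even c \<longleftrightarrow> nat \<bar>c\<bar> mod 2 = 0"
    proof -
      have "even (nat \<bar>c\<bar>) \<longleftrightarrow> even \<bar>c\<bar>" by (rule even_nat_iff) simp
      moreover have "even (nat \<bar>c\<bar>) \<longleftrightarrow> nat \<bar>c\<bar> mod 2 = 0" by (rule even_iff_mod_2_eq_zero)
      ultimately show ?thesis by simp
    qed
    have ra: "nat \<bar>a\<bar> mod 2 = 0 \<or> nat \<bar>a\<bar> mod 2 = 1" by linarith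
    have rc: "nat \<bar>c\<bar> mod 2 = 0 \<or> nat \<bar>c\<bar> mod 2 = 1" by linarith
    show ?thesis
    proof (rule ccontr)
      assume ne: "\<not> (even a \<and> even c)"
      show False
      proof (cases "nat \<bar>a\<bar> mod 2 = 1")
        case True
        show False
        proof (cases "nat \<bar>c\<bar> mod 2 = 1")
          case True2: True
          have "issq (alpha P * alpha H)" using s3 unfolding True True2 by simp
          thus False using n1 by simp
        next
          case False
          hence "nat \<bar>c\<bar> mod 2 = 0" using rc by simp
          hence "issq (alpha P)" using s3 unfolding True by simp
          thus False using n1 by simp
        qed
      next
        case False
        hence a0: "nat \<bar>a\<bar> mod 2 = 0" using ra by simp
        hence "nat \<bar>c\<bar> mod 2 \<noteq> 0" using ne ea ec by simp
        hence "nat \<bar>c\<bar> mod 2 = 1" using rc by simp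
        hence "issq (alpha H)" using s3 unfolding a0 by simp
        thus False using n1 by simp
      qed
    qed
  qed
  have main: "\<forall>a c. nat \<bar>a\<bar> + nat \<bar>c\<bar> = N \<longrightarrow> P [^] a \<otimes> H [^] c = \<one> \<longrightarrow> a = 0 \<and> c = 0" for N
  proof (induction N rule: less_induct)
    case (less N)
    show ?case
    proof (intro allI impI)
      fix a c :: int
      assume N: "nat \<bar>a\<bar> + nat \<bar>c\<bar> = N" and rel: "P [^] a \<otimes> H [^] c = \<one>"
      show "a = 0 \<and> c = 0"
      proof (rule ccontr)
        assume nz: "\<not> (a = 0 \<and> c = 0)"
        have "even a \<and> even c" using par[of a c] rel by simp
        then obtain a' c' where ac: "a = 2*a'" "c = 2*c'" by (auto elim!: evenE)
        define X where "X = P [^] a' \<otimes> H [^] c'"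
        have X: "X \<in> carrier G" using P H unfolding X_def by auto
        have XX: "X \<otimes> X = P [^] a \<otimes> H [^] c"
        proof -
          have "X \<otimes> X = (P [^] a' \<otimes> P [^] a') \<otimes> (H [^] c' \<otimes> H [^] c')"
            unfolding X_def using P H by (simp add: m_ac)
          also have "\<dots> = P [^] a \<otimes> H [^] c" using P H by (simp add: int_pow_mult[symmetric] ac)
          finally show ?thesis .
        qed
        hence "X = \<one> \<or> X = T" using t2[OF X] rel by simp
        thus False
        proof
          assume "X = \<one>"
          moreover have "nat \<bar>a'\<bar> + nat \<bar>c'\<bar> < N"
          proof -
            have "\<bar>a'\<bar> + \<bar>c'\<bar> < \<bar>a\<bar> + \<bar>c\<bar>" using nz ac by (auto simp: abs_mult)
            thus ?thesis using N by linarith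
          qed
          ultimately have "a' = 0 \<and> c' = 0" using less.IH[of "nat \<bar>a'\<bar> + nat \<bar>c'\<bar>"] unfolding X_def by blast
          thus False using nz ac by simp
        next
          assume XT: "X = T"
          have "issq (alpha (P [^] a' \<otimes> H [^] c'))" using t3 XT unfolding X_def by simp
          hence "even a' \<and> even c'" using par[of a' c'] by blast
          then obtain a'' c'' where ac': "a' = 2*a''" "c' = 2*c''" by (auto elim!: evenE)
          define Y where "Y = P [^] a'' \<otimes> H [^] c''"
          have Y: "Y \<in> carrier G" using P H unfolding Y_def by auto
          have "Y \<otimes> Y = X"
          proof -
            have "Y \<otimes> Y = (P [^] a'' \<otimes> P [^] a'') \<otimes> (H [^] c'' \<otimes> H [^] c'')"
              unfolding Y_def using P H by (simp add: m_ac)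
            also have "\<dots> = X" unfolding X_def using P H by (simp add: int_pow_mult[symmetric] ac')
            finally show ?thesis .
          qed
          thus False using t4[OF Y] XT by simp
        qed
      qed
    qed
  qed
  show "P [^] (a::int) \<otimes> H [^] (c::int) = \<one> \<Longrightarrow> a = 0 \<and> c = 0" using main by blast
qed

end


lemma root_id:
  fixes m q :: "'a::field_char_0"
  defines "e0 \<equiv> ((m^2+1)*q^2 + 2*m*q + 2)/3"
  shows "e0^3 + EA m q * e0 + EB m q = 0"
  unfolding e0_def EA_def EB_def by (simp add: field_simps) algebra

lemma b0_id:
  fixes m q :: "'a::field_char_0"
  defines "e0 \<equiv> ((m^2+1)*q^2 + 2*m*q + 2)/3"
  shows "3*e0^2 + EA m q = (m*q+1)^2"
  unfolding e0_def EA_def by (simp add: field_simps) algebra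

lemma onP_id:
  fixes m q :: "'a::field_char_0"
  shows "on_curve (EA m q) (EB m q) (Ppt m q)"
  unfolding on_curve_def Ppt_def EA_def EB_def by (simp add: field_simps) algebra


lemma onH_id:
  fixes m u :: "'a::field_char_0"
  assumes d: "1 + m^2 - u^2 \<noteq> 0"
  defines "q \<equiv> 2*(u-m)/(1+m^2-u^2)"
  shows "on_curve (EA m q) (EB m q) (Hpt m u)"
proof -
  define D where "D = 1+m^2-u^2"
  define w where "w = u - m"
  have D: "D \<noteq> 0" using d by (simp add: D_def)
  have q: "q = 2*w/D" unfolding q_def D_def w_def ..
  define NA where "NA = -((m*m+1)^2*16*w^4+4*m*(m*m+1)*8*w^3*D+(5*m*m+4)*4*w*w*D*D+2*m*2*w*D^3+D^4)"
  define NB1 where "NB1 = 2*(m*m+1)^2*16*w^4+8*m*(m*m+1)*8*w^3*D+(7*m*m+8)*4*w*w*D*D-2*m*2*w*D^3-D^4"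
  define NB2 where "NB2 = (m*m+1)*4*w*w+2*m*2*w*D+2*D*D"
  define NX where "NX = 5*m^4+(6-10*u)*m^3+(4*u^2-6*u+10)*m^2+2*(u^3-3*u^2-5*u+3)*m-u^4+6*u^3-6*u+5"
  define NY where "NY = 2*(m-u+1)^2*(m^2-u*m+1)"
  have A: "EA m q = NA/(3*D^4)" unfolding EA_def q NA_def using D by (simp add: field_simps) algebra
  have B: "EB m q = NB1*NB2/(27*D^6)" unfolding EB_def q NB1_def NB2_def using D by (simp add: field_simps) algebra
  have D': "m^2-u^2+1 = D" unfolding D_def by simp
  have H: "Hpt m u = Some (NX/(3*D^2), NY/D^2)" unfolding Hpt_def NX_def NY_def D' ..
  have key: "27*NY^2*D^2 = NX^3 + 3*NA*NX + NB1*NB2"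
    unfolding NX_def NY_def NA_def NB1_def NB2_def D_def w_def by algebra
  have "(NY/D^2)^2 = (NX/(3*D^2))^3 + NA/(3*D^4) * (NX/(3*D^2)) + NB1*NB2/(27*D^6)"
    using D key by (simp add: field_simps) algebra
  thus ?thesis unfolding on_curve_def H A B by simp
qed


instance fract :: ("{idom,ring_char_0}") ring_char_0
  by standard (auto intro!: injI simp: of_nat_fract eq_fract)

definition ev :: "rat poly poly \<Rightarrow> rat" where "ev p = poly (poly p [:-2:]) 1"

lemma ev_simps[simp]: "ev (p + q) = ev p + ev q" "ev (p * q) = ev p * ev q" "ev (- p) = - ev p"
  "ev (p - q) = ev p - ev q" "ev 0 = 0" "ev 1 = 1" "ev (p ^ n) = ev p ^ n"
  by (simp_all add: ev_def)

definition rv :: "rat poly poly fract \<Rightarrow> rat \<Rightarrow> bool" where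
  "rv f c \<longleftrightarrow> (\<exists>N D. f = Fract N D \<and> ev D \<noteq> 0 \<and> ev N = c * ev D)"

lemma ev_nz: "ev D \<noteq> 0 \<Longrightarrow> D \<noteq> 0" by auto

lemma rv_m: "rv mvar 1"
  unfolding rv_def mvar_def by (rule exI[of _ "[:[:0,1:]:]"], rule exI[of _ 1]) (simp add: ev_def)
lemma rv_u: "rv uvar (-2)"
  unfolding rv_def uvar_def by (rule exI[of _ "[:0,1:]"], rule exI[of _ 1]) (simp add: ev_def)
lemma rv_0: "rv 0 0"
  unfolding rv_def by (rule exI[of _ 0], rule exI[of _ 1]) (simp add: Zero_fract_def)
lemma rv_1: "rv 1 1"
  unfolding rv_def by (rule exI[of _ 1], rule exI[of _ 1]) (simp add: One_fract_def)
lemma rv_numeral: "rv (numeral k) (numeral k)"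
proof -
  have "(numeral k :: rat poly poly fract) = Fract (of_nat (numeral k)) 1"
    by (metis of_nat_fract of_nat_numeral)
  moreover have "ev (of_nat (numeral k)) = numeral k" by (simp add: ev_def)
  ultimately show ?thesis unfolding rv_def by (intro exI[of _ "of_nat (numeral k)"] exI[of _ 1]) simp
qed

lemma rv_add: assumes "rv f a" "rv g b" shows "rv (f + g) (a + b)"
proof -
  obtain N1 D1 N2 D2 where h: "f = Fract N1 D1" "ev D1 \<noteq> 0" "ev N1 = a * ev D1"
    "g = Fract N2 D2" "ev D2 \<noteq> 0" "ev N2 = b * ev D2" using assms unfolding rv_def by blast
  have "f + g = Fract (N1*D2 + N2*D1) (D1*D2)" using h ev_nz by simp
  moreover have "ev (N1*D2 + N2*D1) = (a+b) * ev (D1*D2)" using h by (simp add: algebra_simps)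
  ultimately show ?thesis unfolding rv_def using h by (intro exI[of _ "N1*D2 + N2*D1"] exI[of _ "D1*D2"]) simp
qed

lemma rv_mult: assumes "rv f a" "rv g b" shows "rv (f * g) (a * b)"
proof -
  obtain N1 D1 N2 D2 where h: "f = Fract N1 D1" "ev D1 \<noteq> 0" "ev N1 = a * ev D1"
    "g = Fract N2 D2" "ev D2 \<noteq> 0" "ev N2 = b * ev D2" using assms unfolding rv_def by blast
  have "f * g = Fract (N1*N2) (D1*D2)" using h by simp
  moreover have "ev (N1*N2) = (a*b) * ev (D1*D2)" using h by (simp add: algebra_simps)
  ultimately show ?thesis unfolding rv_def using h by (intro exI[of _ "N1*N2"] exI[of _ "D1*D2"]) simp
qed

lemma rv_uminus: assumes "rv f a" shows "rv (- f) (- a)"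
proof -
  obtain N1 D1 where h: "f = Fract N1 D1" "ev D1 \<noteq> 0" "ev N1 = a * ev D1"
    using assms unfolding rv_def by blast
  have "- f = Fract (- N1) D1" using h by simp
  thus ?thesis unfolding rv_def using h by (intro exI[of _ "- N1"] exI[of _ "D1"]) simp
qed

lemma rv_diff: assumes "rv f a" "rv g b" shows "rv (f - g) (a - b)"
  using rv_add[OF assms(1) rv_uminus[OF assms(2)]] by simp

lemma rv_div: assumes "rv f a" "rv g b" "b \<noteq> 0" shows "rv (f / g) (a / b)"
proof -
  obtain N1 D1 N2 D2 where h: "f = Fract N1 D1" "ev D1 \<noteq> 0" "ev N1 = a * ev D1"
    "g = Fract N2 D2" "ev D2 \<noteq> 0" "ev N2 = b * ev D2" using assms unfolding rv_def by blast
  have "f / g = Fract (N1*D2) (D1*N2)" using h by simp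
  moreover have "ev (D1*N2) \<noteq> 0" using h assms(3) by simp
  moreover have "ev (N1*D2) = (a/b) * ev (D1*N2)" using h assms(3) by (simp add: field_simps)
  ultimately show ?thesis unfolding rv_def by (intro exI[of _ "N1*D2"] exI[of _ "D1*N2"]) simp
qed

lemma rv_power: assumes "rv f a" shows "rv (f ^ n) (a ^ n)"
  by (induction n) (simp_all add: rv_1 rv_mult assms)

lemmas rv_rules = rv_m rv_u rv_0 rv_1 rv_numeral rv_add rv_mult rv_uminus rv_diff rv_div rv_power

lemma rv_nz: assumes "rv f c" "c \<noteq> 0" shows "f \<noteq> 0"
proof
  assume f0: "f = 0"
  obtain N D where h: "f = Fract N D" "ev D \<noteq> 0" "ev N = c * ev D" using assms unfolding rv_def by blast
  have "N \<noteq> 0" using h assms(2) by auto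
  moreover have "Fract N D = Fract 0 1" using f0 h by (simp add: Zero_fract_def)
  hence "N = 0" using h ev_nz by (simp add: eq_fract)
  ultimately show False by simp
qed


definition trail :: "'a::idom \<Rightarrow> 'a poly \<Rightarrow> 'a" where
  "trail a p = poly (SOME r. p = [:-a,1:]^(Polynomial.order a p) * r) a"

lemma trail_eq: assumes "p = [:-a,1:]^(Polynomial.order a p) * r" shows "trail a p = poly r a"
proof -
  have ex: "\<exists>r. p = [:-a,1:]^(Polynomial.order a p) * r" using assms by blast
  define r' where "r' = (SOME r. p = [:-a,1:]^(Polynomial.order a p) * r)"
  have "p = [:-a,1:]^(Polynomial.order a p) * r'" unfolding r'_def using someI_ex[OF ex] .
  hence "[:-a,1:]^(Polynomial.order a p) * r = [:-a,1:]^(Polynomial.order a p) * r'" using assms by simp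
  hence "r = r'" by simp
  thus ?thesis unfolding trail_def r'_def by simp
qed

lemma trail_decomp: obtains r where "p = [:-a,1:]^(Polynomial.order a p) * r"
  using Polynomial.order_1[of a p] by (auto elim!: dvdE)

lemma trail_nz: assumes "p \<noteq> 0" shows "trail a p \<noteq> 0"
proof
  assume t: "trail a p = 0"
  obtain r where r: "p = [:-a,1:]^(Polynomial.order a p) * r" using trail_decomp by blast
  have "poly r a = 0" using t trail_eq[OF r] by simp
  hence "[:-a,1:] dvd r" by (simp add: poly_eq_0_iff_dvd)
  then obtain s where "r = [:-a,1:] * s" by (auto elim!: dvdE)
  hence "p = [:-a,1:]^(Polynomial.order a p) * ([:-a,1:] * s)" using r by simp
  also have "\<dots> = [:-a,1:]^(Suc (Polynomial.order a p)) * s" by (simp only: power_Suc2 mult.assoc)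
  finally have "p = [:-a,1:]^(Suc (Polynomial.order a p)) * s" .
  hence "[:-a,1:]^(Suc (Polynomial.order a p)) dvd p" by (metis dvd_triv_left)
  thus False using Polynomial.order_2[OF assms] by blast
qed

lemma trail_mult: assumes "p \<noteq> 0" "q \<noteq> 0" shows "trail a (p*q) = trail a p * trail a q"
proof -
  obtain r where r: "p = [:-a,1:]^(Polynomial.order a p) * r" using trail_decomp by blast
  obtain s where s: "q = [:-a,1:]^(Polynomial.order a q) * s" using trail_decomp by blast
  have o: "Polynomial.order a (p*q) = Polynomial.order a p + Polynomial.order a q" using assms by (simp add: Polynomial.order_mult)
  have "p*q = [:-a,1:]^(Polynomial.order a (p*q)) * (r*s)" unfolding o power_add
    by (subst r, subst s) (simp add: mult_ac)
  hence "trail a (p*q) = poly (r*s) a" by (rule trail_eq)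
  thus ?thesis using trail_eq[OF r] trail_eq[OF s] by simp
qed

lemma trail_regular: assumes "poly p a \<noteq> 0" shows "trail a p = poly p a"
proof -
  have "Polynomial.order a p = 0" using assms by (rule Polynomial.order_0I)
  hence "p = [:-a,1:]^(Polynomial.order a p) * p" by simp
  thus ?thesis by (rule trail_eq)
qed

definition lt :: "rat poly poly \<Rightarrow> rat" where "lt p = trail 1 (trail [:-2:] p)"

lemma lt_nz: "p \<noteq> 0 \<Longrightarrow> lt p \<noteq> 0"
  unfolding lt_def by (intro trail_nz) simp

lemma lt_mult: "p \<noteq> 0 \<Longrightarrow> q \<noteq> 0 \<Longrightarrow> lt (p*q) = lt p * lt q"
  unfolding lt_def by (simp add: trail_mult trail_nz)

lemma lt_ev: "ev p \<noteq> 0 \<Longrightarrow> lt p = ev p"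
proof -
  assume e: "ev p \<noteq> 0"
  hence "poly p [:-2:] \<noteq> 0" unfolding ev_def by auto
  hence "trail [:-2:] p = poly p [:-2:]" by (simp add: trail_regular)
  thus "lt p = ev p" using e unfolding lt_def ev_def by (simp add: trail_regular)
qed

lemma rv_nonsq: assumes rv: "rv f c" and c: "c \<noteq> 0" and ns: "\<not> (\<exists>r. c = r^2)"
  shows "\<not> issq f"
proof
  assume "issq f"
  then obtain g where g: "f = g^2" by (auto simp: issq_def)
  obtain N D where h: "f = Fract N D" "ev D \<noteq> 0" "ev N = c * ev D" using rv unfolding rv_def by blast
  obtain p r where pr: "g = Fract p r" "r \<noteq> 0" by (cases g)
  have D: "D \<noteq> 0" using h ev_nz by blast
  have eN: "ev N \<noteq> 0" using h c by simp
  hence N: "N \<noteq> 0" by auto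
  have "Fract N D = Fract (p^2) (r^2)" using g h pr by (simp add: power2_eq_square)
  hence e: "N * r^2 = p^2 * D" using D pr by (simp add: eq_fract)
  have p: "p \<noteq> 0" using e N pr by auto
  have "lt (N * r^2) = lt (p^2 * D)" using e by simp
  hence "lt N * (lt r)^2 = (lt p)^2 * lt D" using N D p pr by (simp add: lt_mult power2_eq_square)
  hence "ev N * (lt r)^2 = (lt p)^2 * ev D" using lt_ev eN h by simp
  hence "c * ev D * (lt r)^2 = (lt p)^2 * ev D" using h by simp
  hence "c = (lt p / lt r)^2" using h lt_nz[OF pr(2)] by (simp add: field_simps)
  thus False using ns by blast
qed

lemma rat_sq_nat: assumes "(r::rat)^2 = of_nat n" shows "\<exists>k. k^2 = n"
proof -
  obtain a b where ab: "r = Rat.Fract a b" "b > 0" "coprime a b" by (cases r)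
  have "Rat.Fract (a^2) (b^2) = Rat.Fract (int n) 1" using assms ab by (simp add: power2_eq_square of_nat_rat)
  hence e: "a^2 = int n * b^2" using ab by (simp add: eq_rat)
  have "coprime (a^2) (b^2)" using ab by simp
  moreover have "b^2 dvd a^2" using e by simp
  ultimately have "is_unit (b^2)" by (metis coprime_absorb_right)
  hence "b^2 = 1" using ab by simp
  hence "a^2 = int n" using e by simp
  hence "(nat \<bar>a\<bar>)^2 = n" by (metis nat_int of_nat_power abs_power2 int_nat_eq abs_ge_zero power2_abs)
  thus ?thesis by blast
qed

lemma not_sq_nat: assumes "b^2 < N" "N < (Suc b)^2" shows "\<not> (\<exists>k. k^2 = (N::nat))"
proof
  assume "\<exists>k. k^2 = N"
  then obtain k where k: "k^2 = N" by blast
  show False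
  proof (cases "k \<le> b")
    case True hence "k^2 \<le> b^2" by (simp add: power_mono)
    thus False using k assms by simp
  next
    case False hence "Suc b \<le> k" by simp
    hence "(Suc b)^2 \<le> k^2" by (simp add: power_mono)
    thus False using k assms by simp
  qed
qed

lemma rat_nonsq_nat: assumes "b^2 < N" "N < (Suc b)^2" shows "\<not> (\<exists>r::rat. of_nat N = r^2)"
  using rat_sq_nat not_sq_nat[OF assms] by metis

lemma rat_nonsq_neg: "(c::rat) < 0 \<Longrightarrow> \<not> (\<exists>r. c = r^2)"
  by (metis not_less zero_le_power2)


context ell2 begin

definition EG :: "(('a \<times> 'a) option) monoid" where
  "EG = \<lparr>carrier = {P. oc P}, monoid.mult = ec_add A, one = None\<rparr>"

lemma EG_simps[simp]: "carrier EG = {P. oc P}" "monoid.mult EG = ec_add A" "one EG = None"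
  by (simp_all add: EG_def)

lemma EG_group: "comm_group EG"
proof (rule comm_groupI)
  show "\<And>x y. x \<in> carrier EG \<Longrightarrow> y \<in> carrier EG \<Longrightarrow> x \<otimes>\<^bsub>EG\<^esub> y \<in> carrier EG" using oc_add by simp
  show "\<one>\<^bsub>EG\<^esub> \<in> carrier EG" by simp
  show "\<And>x y z. x \<in> carrier EG \<Longrightarrow> y \<in> carrier EG \<Longrightarrow> z \<in> carrier EG \<Longrightarrow>
    x \<otimes>\<^bsub>EG\<^esub> y \<otimes>\<^bsub>EG\<^esub> z = x \<otimes>\<^bsub>EG\<^esub> (y \<otimes>\<^bsub>EG\<^esub> z)" using add_assoc by simp
  show "\<And>x y. x \<in> carrier EG \<Longrightarrow> y \<in> carrier EG \<Longrightarrow> x \<otimes>\<^bsub>EG\<^esub> y = y \<otimes>\<^bsub>EG\<^esub> x" using add_comm by simp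
  show "\<And>x. x \<in> carrier EG \<Longrightarrow> \<one>\<^bsub>EG\<^esub> \<otimes>\<^bsub>EG\<^esub> x = x" by simp
  show "\<And>x. x \<in> carrier EG \<Longrightarrow> \<exists>y\<in>carrier EG. y \<otimes>\<^bsub>EG\<^esub> x = \<one>\<^bsub>EG\<^esub>"
    by (rule_tac x="ec_neg x" in bexI) auto
qed

interpretation EGg: comm_group EG by (rule EG_group)

lemma inv_EG: "oc X \<Longrightarrow> inv\<^bsub>EG\<^esub> X = ec_neg X"
  by (rule EGg.inv_equality) auto

lemma iter_oc: "oc P \<Longrightarrow> oc ((ec_add A P ^^ k) None)"
  by (induction k) (auto intro: oc_add)

lemma iter_pow: "oc P \<Longrightarrow> (ec_add A P ^^ k) None = P [^]\<^bsub>EG\<^esub> k"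
proof (induction k)
  case 0 thus ?case by simp
next
  case (Suc k)
  have "oc ((ec_add A P ^^ k) None)" using Suc iter_oc by blast
  thus ?case using Suc add_comm by simp
qed

lemma zmul_pow: assumes "oc P" shows "ec_zmul A n P = P [^]\<^bsub>EG\<^esub> n"
proof (cases "0 \<le> n")
  case True
  thus ?thesis using iter_pow[OF assms] by (simp add: ec_zmul_def int_pow_int[symmetric])
next
  case False
  then obtain k where n: "n = - int k" by (metis nonneg_eq_int linorder_not_le less_imp_le minus_minus neg_0_le_iff_le)
  have "P [^]\<^bsub>EG\<^esub> n = inv\<^bsub>EG\<^esub> (P [^]\<^bsub>EG\<^esub> k)" using assms n by (simp add: EGg.int_pow_neg_int)
  also have "\<dots> = ec_neg (P [^]\<^bsub>EG\<^esub> k)" using assms EGg.nat_pow_closed[of P k] by (intro inv_EG) simp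
  finally show ?thesis using False n iter_pow[OF assms] by (simp add: ec_zmul_def)
qed

lemma two_torsion:
  assumes nsq: "\<not> issq (-3*e0^2 - 4*A)" and X: "oc X" and XX: "X \<oplus> X = None"
  shows "X = None \<or> X = Some (e0, 0)"
proof (cases X)
  case None thus ?thesis by simp
next
  case (Some p)
  obtain x y where p: "p = (x,y)" by (cases p)
  have "X = ec_neg X" using XX add_None_iff by simp
  hence "y = -y" using Some p by simp
  hence y0: "y = 0" using eq_neg_self by blast
  hence fx: "x^3 + A*x + B = 0" using X Some p by (simp add: on_curve_Some)
  have "(x - e0) * (x^2 + e0*x + e0^2 + A) = 0" using fx root by algebra
  moreover have "x^2 + e0*x + e0^2 + A \<noteq> 0"
  proof
    assume "x^2 + e0*x + e0^2 + A = 0"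
    hence "-3*e0^2 - 4*A = (2*x+e0)^2" by algebra
    thus False using nsq by simp
  qed
  ultimately have "x = e0" by simp
  thus ?thesis using Some p y0 by simp
qed

lemma no_half:
  assumes b: "b0 = be^2" and n1: "\<not> issq (3*e0 + 2*be)" and n2: "\<not> issq (3*e0 - 2*be)"
    and Y: "oc Y"
  shows "Y \<oplus> Y \<noteq> Some (e0, 0)"
proof
  assume YY: "Y \<oplus> Y = Some (e0, 0)"
  obtain x y where Yp: "Y = Some (x,y)" using YY by (cases Y) auto
  have yne: "y \<noteq> 0"
  proof
    assume "y = 0" hence "Y \<oplus> Y = None" using Yp by (simp add: ec_add_def)
    thus False using YY by simp
  qed
  define l where "l = (3*x^2+A)/(2*y)"
  have "Y \<oplus> Y = Some (l^2 - x - x, -(y + l*((l^2 - x - x) - x)))"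
    using ec_add_tangent[OF yne, of A x] Yp by (simp add: Let_def l_def)
  hence e1: "e0 = l^2 - x - x" and e2': "0 = -(y + l*((l^2 - x - x) - x))" using YY by auto
  have e2: "y + l*(e0 - x) = 0" using e1 e2' by algebra
  have fy: "y^2 = x^3 + A*x + B" using Y Yp by (simp add: on_curve_Some)
  have yl: "y = l*(x - e0)" using e2 by (simp add: algebra_simps)
  have xne: "x - e0 \<noteq> 0" using yl yne by auto
  have "(x-e0) * ((x-e0)^2 - b0) = 0"
  proof -
    have "y^2 = (x-e0)^3 + 3*e0*(x-e0)^2 + b0*(x-e0)" using fy root unfolding b0_def by algebra
    moreover have "y^2 = (3*e0 + 2*(x-e0))*(x-e0)^2" using yl e1 by algebra
    ultimately show ?thesis by algebra
  qed
  hence "(x-e0)^2 = be^2" using xne b by simp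
  hence "(x - e0 - be)*(x - e0 + be) = 0" by algebra
  hence "x - e0 - be = 0 \<or> x - e0 + be = 0" by (simp only: mult_eq_0_iff)
  hence "x - e0 = be \<or> x - e0 = -be" by (auto simp: algebra_simps)
  moreover have L2: "l^2 = 3*e0 + 2*(x-e0)" using e1 by algebra
  ultimately show False
  proof (elim disjE)
    assume "x - e0 = be"
    hence "3*e0 + 2*be = l^2" using L2 by simp
    hence "issq (3*e0 + 2*be)" unfolding issq_def by blast
    thus False using n1 by simp
  next
    assume "x - e0 = -be"
    hence "3*e0 - 2*be = l^2" using L2 by simp
    hence "issq (3*e0 - 2*be)" unfolding issq_def by blast
    thus False using n2 by simp
  qed
qed

theorem indep:
  assumes b: "b0 = be^2" and nq: "\<not> issq (3*e0 + 2*be)" "\<not> issq (3*e0 - 2*be)" "\<not> issq (-3*e0^2 - 4*A)"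
    and P: "oc P" and H: "oc H"
    and n1: "\<not> issq (alpha P)" "\<not> issq (alpha H)" "\<not> issq (alpha P * alpha H)"
  shows "ec_add A (ec_zmul A a P) (ec_zmul A c H) = None \<longrightarrow> a = 0 \<and> c = 0"
proof
  assume "ec_add A (ec_zmul A a P) (ec_zmul A c H) = None"
  hence rel: "P [^]\<^bsub>EG\<^esub> a \<otimes>\<^bsub>EG\<^esub> H [^]\<^bsub>EG\<^esub> c = \<one>\<^bsub>EG\<^esub>" using zmul_pow P H by simp
  have T: "oc (Some (e0, 0))" using root by (simp add: on_curve_Some)
  show "a = 0 \<and> c = 0"
  proof (rule EGg.descent[of alpha P H "Some (e0,0)" a c])
    show "\<And>x. x \<in> carrier EG \<Longrightarrow> alpha x \<noteq> 0" using alpha_nz by blast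
    show "\<And>x y. x \<in> carrier EG \<Longrightarrow> y \<in> carrier EG \<Longrightarrow> issq (alpha (x \<otimes>\<^bsub>EG\<^esub> y) * alpha x * alpha y)"
      using alpha_hom by simp
    show "P \<in> carrier EG" "H \<in> carrier EG" using P H by auto
    show "\<not> issq (alpha P)" "\<not> issq (alpha H)" "\<not> issq (alpha P * alpha H)" using n1 by auto
    show "\<And>X. X \<in> carrier EG \<Longrightarrow> X \<otimes>\<^bsub>EG\<^esub> X = \<one>\<^bsub>EG\<^esub> \<Longrightarrow> X = \<one>\<^bsub>EG\<^esub> \<or> X = Some (e0, 0)"
      using two_torsion[OF nq(3)] by simp
    show "issq (alpha (Some (e0, 0)))" using b by (simp add: alpha_def ax_def)
    show "\<And>Y. Y \<in> carrier EG \<Longrightarrow> Y \<otimes>\<^bsub>EG\<^esub> Y \<noteq> Some (e0, 0)" using no_half[OF b nq(1) nq(2)] by simp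
    show "P [^]\<^bsub>EG\<^esub> a \<otimes>\<^bsub>EG\<^esub> H [^]\<^bsub>EG\<^esub> c = \<one>\<^bsub>EG\<^esub>" by (rule rel)
  qed
qed

end


definition qf :: "'a::field \<Rightarrow> 'a \<Rightarrow> 'a" where "qf m u = 2*(u-m)/(1+m^2-u^2)"
definition e0f :: "'a::field \<Rightarrow> 'a \<Rightarrow> 'a" where "e0f m u = ((m^2+1)*(qf m u)^2 + 2*m*(qf m u) + 2)/3"
definition xPf :: "'a::field \<Rightarrow> 'a \<Rightarrow> 'a" where "xPf m u = - ((2*m^2-1)*(qf m u)^2 + 4*m*(qf m u) + 1) / 3"
definition xHf :: "'a::field \<Rightarrow> 'a \<Rightarrow> 'a" where
  "xHf m u = (5*m^4 + (6-10*u)*m^3 + (4*u^2-6*u+10)*m^2 + 2*(u^3-3*u^2-5*u+3)*m - u^4 + 6*u^3 - 6*u + 5)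
       / (3 * (m^2-u^2+1)^2)"
definition g1 :: "'a::field \<Rightarrow> 'a \<Rightarrow> 'a" where "g1 m u = 1 + m^2 - u^2"
definition g2 :: "'a::field \<Rightarrow> 'a \<Rightarrow> 'a" where "g2 m u = 4*(EA m (qf m u))^3 + 27*(EB m (qf m u))^2"
definition g3 :: "'a::field \<Rightarrow> 'a \<Rightarrow> 'a" where "g3 m u = 3*e0f m u + 2*(m*qf m u+1)"
definition g4 :: "'a::field \<Rightarrow> 'a \<Rightarrow> 'a" where "g4 m u = 3*e0f m u - 2*(m*qf m u+1)"
definition g5 :: "'a::field \<Rightarrow> 'a \<Rightarrow> 'a" where "g5 m u = -3*(e0f m u)^2 - 4*EA m (qf m u)"
definition g6 :: "'a::field \<Rightarrow> 'a \<Rightarrow> 'a" where "g6 m u = xPf m u - e0f m u"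
definition g7 :: "'a::field \<Rightarrow> 'a \<Rightarrow> 'a" where "g7 m u = xHf m u - e0f m u"
definition g8 :: "'a::field \<Rightarrow> 'a \<Rightarrow> 'a" where "g8 m u = (xPf m u - e0f m u) * (xHf m u - e0f m u)"

lemmas gdefs = g1_def g2_def g3_def g4_def g5_def g6_def g7_def g8_def qf_def e0f_def xPf_def xHf_def EA_def EB_def

lemma rv_g1: "rv (g1 mvar uvar) (g1 1 (-2))" unfolding gdefs by (intro rv_rules)
lemma rv_g2: "rv (g2 mvar uvar) (g2 1 (-2))" unfolding gdefs by (intro rv_rules) simp_all
lemma rv_g3: "rv (g3 mvar uvar) (g3 1 (-2))" unfolding gdefs by (intro rv_rules) simp_all
lemma rv_g4: "rv (g4 mvar uvar) (g4 1 (-2))" unfolding gdefs by (intro rv_rules) simp_all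
lemma rv_g5: "rv (g5 mvar uvar) (g5 1 (-2))" unfolding gdefs by (intro rv_rules) simp_all
lemma rv_g6: "rv (g6 mvar uvar) (g6 1 (-2))" unfolding gdefs by (intro rv_rules) simp_all
lemma rv_g7: "rv (g7 mvar uvar) (g7 1 (-2))" unfolding gdefs by (intro rv_rules) simp_all
lemma rv_g8: "rv (g8 mvar uvar) (g8 1 (-2))" unfolding gdefs by (intro rv_rules) simp_all

lemma val_g1: "g1 (1::rat) (-2) = -2" by (simp add: gdefs)
lemma val_g2: "g2 (1::rat) (-2) \<noteq> 0" by (simp add: gdefs power_divide)
lemma val_g3: "g3 (1::rat) (-2) = 34" by (simp add: gdefs power_divide)
lemma val_g4: "g4 (1::rat) (-2) = 18" by (simp add: gdefs power_divide)
lemma val_g5: "g5 (1::rat) (-2) = 612" by (simp add: gdefs power_divide)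
lemma val_g6: "g6 (1::rat) (-2) = -16" by (simp add: gdefs power_divide)
lemma val_g7: "g7 (1::rat) (-2) = -8" by (simp add: gdefs power_divide)
lemma val_g8: "g8 (1::rat) (-2) = 128" by (simp add: gdefs power_divide)

lemma ns34: "\<not>(\<exists>r::rat. 34 = r^2)" using rat_nonsq_nat[of 5 34] by simp
lemma ns18: "\<not>(\<exists>r::rat. 18 = r^2)" using rat_nonsq_nat[of 4 18] by simp
lemma ns612: "\<not>(\<exists>r::rat. 612 = r^2)" using rat_nonsq_nat[of 24 612] by simp
lemma ns128: "\<not>(\<exists>r::rat. 128 = r^2)" using rat_nonsq_nat[of 11 128] by simp


theorem theorem3:
  fixes m u q :: Qmu
  defines "m \<equiv> mvar" and "u \<equiv> uvar" and "q \<equiv> 2 * (u - m) / (1 + m^2 - u^2)"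
  shows "nonsingular (EA m q) (EB m q)
    \<and> on_curve (EA m q) (EB m q) (Ppt m q)
    \<and> on_curve (EA m q) (EB m q) (Hpt m u)
    \<and> (\<forall>a b :: int. ec_add (EA m q) (ec_zmul (EA m q) a (Ppt m q)) (ec_zmul (EA m q) b (Hpt m u)) = None
                      \<longrightarrow> a = 0 \<and> b = 0)"
proof -
  have qq: "q = qf m u" unfolding q_def qf_def ..
  have gm: "\<And>g. g mvar uvar = g m u" unfolding m_def u_def ..
  have D: "1 + m^2 - u^2 \<noteq> 0"
    using rv_nz[OF rv_g1] val_g1 unfolding gm g1_def by simp
  have ns: "nonsingular (EA m q) (EB m q)"
    using rv_nz[OF rv_g2 val_g2] unfolding gm g2_def qq[symmetric] nonsingular_def .
  have onP: "on_curve (EA m q) (EB m q) (Ppt m q)" by (rule onP_id)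
  have onH: "on_curve (EA m q) (EB m q) (Hpt m u)" using onH_id[OF D] unfolding q_def .
  have root: "(e0f m u)^3 + EA m q * e0f m u + EB m q = 0"
    using root_id[of m q] unfolding e0f_def qq[symmetric] .
  interpret E: ell2 "EA m q" "EB m q" "e0f m u"
    by unfold_locales (use ns root in auto)
  have b: "E.b0 = (m*q+1)^2" unfolding E.b0_def using b0_id[of m q] unfolding e0f_def qq[symmetric] .
  have nq1: "\<not> issq (3 * e0f m u + 2 * (m*q+1))"
  proof -
    have "\<not> issq (g3 mvar uvar)"
      using rv_nonsq[OF rv_g3[unfolded val_g3] _ ns34] by simp
    thus ?thesis unfolding gm g3_def qq .
  qed
  have nq2: "\<not> issq (3 * e0f m u - 2 * (m*q+1))"
  proof -
    have "\<not> issq (g4 mvar uvar)"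
      using rv_nonsq[OF rv_g4[unfolded val_g4] _ ns18] by simp
    thus ?thesis unfolding gm g4_def qq .
  qed
  have nq3: "\<not> issq (-3 * (e0f m u)^2 - 4 * EA m q)"
  proof -
    have "\<not> issq (g5 mvar uvar)"
      using rv_nonsq[OF rv_g5[unfolded val_g5] _ ns612] by simp
    thus ?thesis unfolding gm g5_def qq .
  qed
  have P: "Ppt m q = Some (xPf m u, q * (m*q+1)^2)" unfolding Ppt_def xPf_def qq ..
  have H: "Hpt m u = Some (xHf m u, 2*(m-u+1)^2*(m^2-u*m+1) / (m^2-u^2+1)^2)" unfolding Hpt_def xHf_def ..
  have g6nz: "xPf m u - e0f m u \<noteq> 0" using rv_nz[OF rv_g6] val_g6 unfolding gm g6_def by simp
  have g7nz: "xHf m u - e0f m u \<noteq> 0" using rv_nz[OF rv_g7] val_g7 unfolding gm g7_def by simp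
  have aP: "E.alpha (Ppt m q) = xPf m u - e0f m u" using g6nz unfolding P E.alpha_def E.ax_def by simp
  have aH: "E.alpha (Hpt m u) = xHf m u - e0f m u" using g7nz unfolding H E.alpha_def E.ax_def by simp
  have n1: "\<not> issq (E.alpha (Ppt m q))"
  proof -
    have "\<not> issq (g6 mvar uvar)"
      using rv_nonsq[OF rv_g6[unfolded val_g6] _ rat_nonsq_neg] by simp
    thus ?thesis unfolding gm g6_def aP .
  qed
  have n2: "\<not> issq (E.alpha (Hpt m u))"
  proof -
    have "\<not> issq (g7 mvar uvar)"
      using rv_nonsq[OF rv_g7[unfolded val_g7] _ rat_nonsq_neg] by simp
    thus ?thesis unfolding gm g7_def aH .
  qed
  have n3: "\<not> issq (E.alpha (Ppt m q) * E.alpha (Hpt m u))"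
  proof -
    have "\<not> issq (g8 mvar uvar)"
      using rv_nonsq[OF rv_g8[unfolded val_g8] _ ns128] by simp
    thus ?thesis unfolding gm g8_def aP aH .
  qed
  have ind: "\<forall>a b :: int. ec_add (EA m q) (ec_zmul (EA m q) a (Ppt m q)) (ec_zmul (EA m q) b (Hpt m u)) = None
                      \<longrightarrow> a = 0 \<and> b = 0"
    using E.indep[OF b nq1 nq2 nq3 onP onH n1 n2 n3] by blast
  show ?thesis using ns onP onH ind by blast
qed


end
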